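(* Let $G$ be the cube graph $Q_3$, let $P$ be a pot realizing $G$ according to Scenario 3, and let $\lambda$ be an assembly design of $G$ with $P_\lambda(G)\subseteq P$. Then there are at most two pairwise disjoint pairs $\{v_i,v_j\}$ of distinct vertices of $G$ with $\lambda(v_i)=\lambda(v_j)$; that is, there do not exist three pairwise disjoint such pairs.
   Context: Fix a set $\Sigma$ of symbols (bond-edge types) and a disjoint copy $\hat\Sigma=\{\hat a:a\in\Sigma\}$ with $\hat{\hat a}=a$; elements of $\Sigma\cup\hat\Sigma$ are cohesive-end types. A tile is a finite multiset of cohesive-end types. A pot is a finite set $P$ of tiles such that whenever $x$ occurs in a tile of $P$, $\hat x$ occurs in some tile of $P$. Graphs are finite, loops and multiple edges allowed. An assembly design of a graph $H$ is a labeling $\lambda$ of the half-edges of $H$ by cohesive-end types such that the two half-edges of each edge receive complementary labels $x,\hat x$; $\lambda(v)=t_v$ is the multiset of labels of half-edges at $v$, and $P_\lambda(H)=\{t_v\}$. $P$ realizes $H$ ($H\in\mathcal{O}(P)$) if some assembly design $\lambda$ has $P_\lambda(H)\subseteq P$. $P$ realizes $G$ according to Scenario 3 if $G\in\mathcal{O}(P)$, every $H\in\mathcal{O}(P)$ has $\#V(H)\ge\#V(G)$, and every $H\in\mathcal{O}(P)$ with $\#V(H)=\#V(G)$ is isomorphic to $G$. *)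

theory Defs
  imports Main "HOL-Library.Multiset"
begin

text \<open>Cohesive-end types: a symbol of Sigma (the type 'a) together with a flag;
  (a, False) is the bond-edge type a, (a, True) is its hatted copy.\<close>
type_synonym 'a cend = "'a \<times> bool"

definition compl :: "'a cend \<Rightarrow> 'a cend" where
  "compl x = (fst x, \<not> snd x)"

type_synonym 'a tile = "'a cend multiset"

definition pot :: "'a tile set \<Rightarrow> bool" where
  "pot P \<longleftrightarrow> finite P \<and> (\<forall>t\<in>P. \<forall>x. x \<in># t \<longrightarrow> (\<exists>t'\<in>P. compl x \<in># t'))"

text \<open>The half-edges of e are (e, True) (at fst (ends e)) and (e, False) (at snd (ends e)).\<close>
record graph =
  verts :: "nat set"
  edges :: "nat set"
  ends  :: "nat \<Rightarrow> nat \<times> nat"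

definition wf_graph :: "graph \<Rightarrow> bool" where
  "wf_graph G \<longleftrightarrow> finite (verts G) \<and> finite (edges G) \<and> verts G \<noteq> {} \<and>
     (\<forall>e\<in>edges G. fst (ends G e) \<in> verts G \<and> snd (ends G e) \<in> verts G)"

definition hend :: "graph \<Rightarrow> nat \<times> bool \<Rightarrow> nat" where
  "hend G h = (if snd h then fst (ends G (fst h)) else snd (ends G (fst h)))"

definition half_edges_at :: "graph \<Rightarrow> nat \<Rightarrow> (nat \<times> bool) set" where
  "half_edges_at G v = {h. fst h \<in> edges G \<and> hend G h = v}"

definition tile_at :: "graph \<Rightarrow> (nat \<times> bool \<Rightarrow> 'a cend) \<Rightarrow> nat \<Rightarrow> 'a tile" where
  "tile_at G lam v = image_mset lam (mset_set (half_edges_at G v))"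

definition assembly_design :: "graph \<Rightarrow> (nat \<times> bool \<Rightarrow> 'a cend) \<Rightarrow> bool" where
  "assembly_design G lam \<longleftrightarrow> (\<forall>e\<in>edges G. lam (e, True) = compl (lam (e, False)))"

definition pot_of :: "graph \<Rightarrow> (nat \<times> bool \<Rightarrow> 'a cend) \<Rightarrow> 'a tile set" where
  "pot_of G lam = tile_at G lam ` verts G"

definition realizes :: "'a tile set \<Rightarrow> graph \<Rightarrow> bool" where
  "realizes P H \<longleftrightarrow> wf_graph H \<and> (\<exists>lam. assembly_design H lam \<and> pot_of H lam \<subseteq> P)"

definition graph_iso :: "graph \<Rightarrow> graph \<Rightarrow> bool" where
  "graph_iso G H \<longleftrightarrow> (\<exists>f g. bij_betw f (verts G) (verts H) \<and> bij_betw g (edges G) (edges H) \<and>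
     (\<forall>e\<in>edges G. ends H (g e) = (f (fst (ends G e)), f (snd (ends G e))) \<or>
                  ends H (g e) = (f (snd (ends G e)), f (fst (ends G e)))))"

definition scenario3 :: "'a tile set \<Rightarrow> graph \<Rightarrow> bool" where
  "scenario3 P G \<longleftrightarrow> realizes P G \<and>
     (\<forall>H. realizes P H \<longrightarrow> card (verts H) \<ge> card (verts G)) \<and>
     (\<forall>H. realizes P H \<and> card (verts H) = card (verts G) \<longrightarrow> graph_iso H G)"

text \<open>The cube graph Q_3: vertices 0..7 (bit strings), edges join vertices differing in one bit.\<close>
definition Q3_edge_list :: "(nat \<times> nat) list" where
  "Q3_edge_list = [(0,1),(2,3),(4,5),(6,7),(0,2),(1,3),(4,6),(5,7),(0,4),(1,5),(2,6),(3,7)]"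

definition Q3 :: graph where
  "Q3 = \<lparr> verts = {0..<8}, edges = {0..<12},
          ends = (\<lambda>e. if e < 12 then Q3_edge_list ! e else (0,0)) \<rparr>"

end

theory Submission
  imports Defs
begin


definition sw :: "nat \<times> bool \<Rightarrow> nat \<times> bool \<Rightarrow> nat \<times> bool \<Rightarrow> nat \<times> bool" where
  "sw h1 h2 h = (if h = h1 then h2 else if h = h2 then h1 else h)"

definition swapG :: "graph \<Rightarrow> nat \<times> bool \<Rightarrow> nat \<times> bool \<Rightarrow> graph" where
  "swapG G h1 h2 = G\<lparr>ends := (\<lambda>e. (hend G (sw h1 h2 (e,True)), hend G (sw h1 h2 (e,False))))\<rparr>"

lemma sw_sw[simp]: "sw h1 h2 (sw h1 h2 h) = h"
  by (auto simp: sw_def)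

lemma inj_sw: "inj (sw h1 h2)"
  by (metis injI sw_sw)

lemma hend_swapG: "hend (swapG G h1 h2) h = hend G (sw h1 h2 h)"
  by (cases h) (auto simp: hend_def swapG_def)

lemma swapG_simps[simp]: "verts (swapG G h1 h2) = verts G" "edges (swapG G h1 h2) = edges G"
  by (auto simp: swapG_def)

lemma fst_sw: "fst h1 \<in> edges G \<Longrightarrow> fst h2 \<in> edges G \<Longrightarrow> fst (sw h1 h2 h) \<in> edges G \<longleftrightarrow> fst h \<in> edges G"
  by (auto simp: sw_def)

lemma hend_in: "wf_graph G \<Longrightarrow> fst h \<in> edges G \<Longrightarrow> hend G h \<in> verts G"
  by (auto simp: wf_graph_def hend_def)

lemma wf_swapG: "wf_graph G \<Longrightarrow> fst h1 \<in> edges G \<Longrightarrow> fst h2 \<in> edges G \<Longrightarrow> wf_graph (swapG G h1 h2)"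
  unfolding wf_graph_def
  apply (intro conjI)
  apply (simp_all add: wf_graph_def)
  apply (intro ballI)
  apply (simp add: swapG_def)
  using hend_in[of G] fst_sw[of h1 G h2] unfolding wf_graph_def
  by (metis fst_conv)

lemma half_edges_swapG:
  assumes "fst h1 \<in> edges G" "fst h2 \<in> edges G"
  shows "half_edges_at (swapG G h1 h2) w = sw h1 h2 ` half_edges_at G w"
proof -
  have *: "x \<in> half_edges_at (swapG G h1 h2) w \<longleftrightarrow> sw h1 h2 x \<in> half_edges_at G w" for x
    using fst_sw[OF assms, of x] by (auto simp: half_edges_at_def hend_swapG)
  show ?thesis
  proof (rule set_eqI)
    fix x
    have "x \<in> sw h1 h2 ` half_edges_at G w \<longleftrightarrow> sw h1 h2 x \<in> half_edges_at G w"
    proof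
      assume "x \<in> sw h1 h2 ` half_edges_at G w"
      then obtain y where "y \<in> half_edges_at G w" "x = sw h1 h2 y" by blast
      then show "sw h1 h2 x \<in> half_edges_at G w" by simp
    next
      assume "sw h1 h2 x \<in> half_edges_at G w"
      then have "sw h1 h2 (sw h1 h2 x) \<in> sw h1 h2 ` half_edges_at G w" by blast
      then show "x \<in> sw h1 h2 ` half_edges_at G w" by simp
    qed
    then show "x \<in> half_edges_at (swapG G h1 h2) w \<longleftrightarrow> x \<in> sw h1 h2 ` half_edges_at G w"
      using * by blast
  qed
qed

lemma tile_swapG:
  assumes "fst h1 \<in> edges G" "fst h2 \<in> edges G" "lam h1 = lam h2"
  shows "tile_at (swapG G h1 h2) lam w = tile_at G lam w"
proof -
  have "lam \<circ> sw h1 h2 = lam" using assms(3) by (auto simp: sw_def)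
  then show ?thesis
    unfolding tile_at_def half_edges_swapG[OF assms(1,2)]
    by (metis image_mset_mset_set[OF inj_on_subset[OF inj_sw subset_UNIV]] multiset.map_comp)
qed

lemma realizes_swapG:
  assumes "wf_graph G" "fst h1 \<in> edges G" "fst h2 \<in> edges G" "lam h1 = lam h2"
    "assembly_design G lam" "pot_of G lam \<subseteq> P"
  shows "realizes P (swapG G h1 h2)"
  unfolding realizes_def
proof (intro conjI exI)
  show "wf_graph (swapG G h1 h2)" using wf_swapG assms by blast
  show "assembly_design (swapG G h1 h2) lam" using assms(5) by (simp add: assembly_design_def)
  show "pot_of (swapG G h1 h2) lam \<subseteq> P" using assms(6) tile_swapG[OF assms(2-4)]
    by (simp add: pot_of_def)
qed




definition adjH :: "graph \<Rightarrow> nat \<Rightarrow> nat \<Rightarrow> bool" where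
  "adjH H a b \<longleftrightarrow> (\<exists>e\<in>edges H. ends H e = (a,b) \<or> ends H e = (b,a))"

definition bad :: "graph \<Rightarrow> bool" where
  "bad H \<longleftrightarrow> (\<exists>e\<in>edges H. fst (ends H e) = snd (ends H e)) \<or>
     (\<exists>e\<in>edges H. \<exists>e'\<in>edges H. e \<noteq> e' \<and> (ends H e = ends H e' \<or> ends H e = prod.swap (ends H e'))) \<or>
     (\<exists>a b c. a \<noteq> b \<and> b \<noteq> c \<and> a \<noteq> c \<and> adjH H a b \<and> adjH H b c \<and> adjH H a c)"

lemma bad_iso:
  assumes "graph_iso H G" "wf_graph H" "bad H"
  shows "bad G"
proof -
  obtain f g where f: "bij_betw f (verts H) (verts G)" and g: "bij_betw g (edges H) (edges G)"
    and fg: "\<forall>e\<in>edges H. ends G (g e) = (f (fst (ends H e)), f (snd (ends H e))) \<or>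
                  ends G (g e) = (f (snd (ends H e)), f (fst (ends H e)))"
    using assms(1) unfolding graph_iso_def by blast
  have gi: "inj_on g (edges H)" and gm: "g ` edges H = edges G" using g by (auto simp: bij_betw_def)
  have fi: "inj_on f (verts H)" using f by (auto simp: bij_betw_def)
  have ge: "g e \<in> edges G" if "e \<in> edges H" for e using gm that by blast
  have adj: "adjH G (f a) (f b)" if ab: "adjH H a b" for a b
  proof -
    obtain e where e: "e \<in> edges H" "ends H e = (a,b) \<or> ends H e = (b,a)" using ab unfolding adjH_def by blast
    have "ends G (g e) = (f a, f b) \<or> ends G (g e) = (f b, f a)" using fg e by auto
    then show ?thesis unfolding adjH_def using ge[OF e(1)] by blast
  qed
  have inv: "a \<in> verts H \<and> b \<in> verts H" if ab: "adjH H a b" for a b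
  proof -
    obtain e where e: "e \<in> edges H" "ends H e = (a,b) \<or> ends H e = (b,a)" using ab unfolding adjH_def by blast
    have "fst (ends H e) \<in> verts H" "snd (ends H e) \<in> verts H" using e(1) assms(2) unfolding wf_graph_def by auto
    then show ?thesis using e(2) by auto
  qed
  have c1: "bad G" if "e \<in> edges H" "fst (ends H e) = snd (ends H e)" for e
  proof -
    have "fst (ends G (g e)) = snd (ends G (g e))" using fg that by auto
    then show ?thesis using ge[OF that(1)] unfolding bad_def by blast
  qed
  have c2: "bad G" if e: "e \<in> edges H" "e' \<in> edges H" "e \<noteq> e'"
      "ends H e = ends H e' \<or> ends H e = prod.swap (ends H e')" for e e'
  proof -
    have "g e \<noteq> g e'" using gi e unfolding inj_on_def by blast
    moreover have "ends G (g e) = ends G (g e') \<or> ends G (g e) = prod.swap (ends G (g e'))"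
      using fg[rule_format, OF e(1)] fg[rule_format, OF e(2)] e(4) by (cases "ends H e'") auto
    ultimately show ?thesis using ge e(1,2) unfolding bad_def by blast
  qed
  have c3: "bad G" if t: "a \<noteq> b" "b \<noteq> c" "a \<noteq> c" "adjH H a b" "adjH H b c" "adjH H a c" for a b c
  proof -
    have v: "a \<in> verts H" "b \<in> verts H" "c \<in> verts H" using inv t(4,5) by blast+
    have "f a \<noteq> f b" "f b \<noteq> f c" "f a \<noteq> f c" using inj_onD[OF fi] v t(1-3) by blast+
    then show ?thesis using adj t unfolding bad_def by blast
  qed
  have "(\<exists>e\<in>edges H. fst (ends H e) = snd (ends H e)) \<or>
     (\<exists>e\<in>edges H. \<exists>e'\<in>edges H. e \<noteq> e' \<and> (ends H e = ends H e' \<or> ends H e = prod.swap (ends H e'))) \<or>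
     (\<exists>a b c. a \<noteq> b \<and> b \<noteq> c \<and> a \<noteq> c \<and> adjH H a b \<and> adjH H b c \<and> adjH H a c)"
    using assms(3) unfolding bad_def .
  then show ?thesis
  proof (elim disjE)
    assume "\<exists>e\<in>edges H. fst (ends H e) = snd (ends H e)"
    then show ?thesis using c1 by blast
  next
    assume "\<exists>e\<in>edges H. \<exists>e'\<in>edges H. e \<noteq> e' \<and> (ends H e = ends H e' \<or> ends H e = prod.swap (ends H e'))"
    then obtain e e' where "e \<in> edges H" "e' \<in> edges H" "e \<noteq> e'"
      "ends H e = ends H e' \<or> ends H e = prod.swap (ends H e')" by blast
    then show ?thesis using c2 by blast
  next
    assume "\<exists>a b c. a \<noteq> b \<and> b \<noteq> c \<and> a \<noteq> c \<and> adjH H a b \<and> adjH H b c \<and> adjH H a c"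
    then obtain a b c where "a \<noteq> b" "b \<noteq> c" "a \<noteq> c" "adjH H a b" "adjH H b c" "adjH H a c" by blast
    then show ?thesis using c3 by blast
  qed
qed



lemma less8: "(w::nat) < 8 \<Longrightarrow> w = 0 \<or> w = 1 \<or> w = 2 \<or> w = 3 \<or> w = 4 \<or> w = 5 \<or> w = 6 \<or> w = 7"
  by auto
lemma less3: "(k::nat) < 3 \<Longrightarrow> k = 0 \<or> k = 1 \<or> k = 2"
  by auto
lemma less12: "(e::nat) < 12 \<Longrightarrow> e = 0 \<or> e = 1 \<or> e = 2 \<or> e = 3 \<or> e = 4 \<or> e = 5 \<or> e = 6 \<or> e = 7 \<or> e = 8 \<or> e = 9 \<or> e = 10 \<or> e = 11"
  by arith

definition flip :: "nat \<Rightarrow> nat \<Rightarrow> nat" where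
  "flip w k = (if odd (w div 2^k) then w - 2^k else w + 2^k)"

definition he :: "nat \<Rightarrow> nat \<Rightarrow> nat \<times> bool" where
  "he w k = (if k = 0 then (w div 2, even w) else if k = 1 then (4 + w mod 2 + 2*(w div 4), even (w div 2))
            else (8 + w mod 4, w < 4))"

lemma Q3_simps: "verts Q3 = {0..<8}" "edges Q3 = {0..<12}"
  by (auto simp: Q3_def)

lemma hendQ: "hend Q3 h = (let e = Q3_edge_list ! fst h in if fst h < 12 then (if snd h then fst e else snd e) else 0)"
  by (auto simp: hend_def Q3_def Let_def)

lemma flip_lt: "w < 8 \<Longrightarrow> k < 3 \<Longrightarrow> flip w k < 8"
  using less8[of w] less3[of k] by (auto simp: flip_def)
lemma flip_flip: "w < 8 \<Longrightarrow> k < 3 \<Longrightarrow> flip (flip w k) k = w"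
  using less8[of w] less3[of k] by (auto simp: flip_def)
lemma flip_ne: "w < 8 \<Longrightarrow> k < 3 \<Longrightarrow> flip w k \<noteq> w"
  using less8[of w] less3[of k] by (auto simp: flip_def)

lemma he_edge: "w < 8 \<Longrightarrow> k < 3 \<Longrightarrow> fst (he w k) < 12"
  using less8[of w] less3[of k] by (auto simp: he_def)
lemma he_div: "w < 8 \<Longrightarrow> k < 3 \<Longrightarrow> fst (he w k) div 4 = k"
  using less8[of w] less3[of k] by (auto simp: he_def)
lemma he_hend: "w < 8 \<Longrightarrow> k < 3 \<Longrightarrow> hend Q3 (he w k) = w"
  using less8[of w] less3[of k] by (auto simp: he_def hendQ Q3_edge_list_def)
lemma he_other: "w < 8 \<Longrightarrow> k < 3 \<Longrightarrow> (fst (he w k), \<not> snd (he w k)) = he (flip w k) k"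
  using less8[of w] less3[of k] by (auto simp: he_def flip_def)
lemma he_surj: "fst h < 12 \<Longrightarrow> h = he (hend Q3 h) (fst h div 4)"
  apply (cases h)
  subgoal for e b
    using less12[of e] by (cases b) (auto simp: he_def hendQ Q3_edge_list_def)
  done
lemma hend_lt: "fst h < 12 \<Longrightarrow> hend Q3 h < 8"
  apply (cases h)
  subgoal for e b
    using less12[of e] by (cases b) (auto simp: hendQ Q3_edge_list_def)
  done



lemma he_inj: "w < 8 \<Longrightarrow> k < 3 \<Longrightarrow> w' < 8 \<Longrightarrow> k' < 3 \<Longrightarrow> he w k = he w' k' \<Longrightarrow> w = w' \<and> k = k'"
  by (metis he_div he_hend)

lemma edge_eq:
  assumes "w < 8" "k < 3" "w' < 8" "k' < 3" "fst (he w k) = fst (he w' k')"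
  shows "k' = k \<and> (w' = w \<or> w' = flip w k)"
proof -
  have kk: "k' = k" using he_div assms by metis
  show ?thesis
  proof (cases "snd (he w' k) = snd (he w k)")
    case True
    then have "he w' k = he w k" using assms kk by (simp add: prod_eq_iff)
    then show ?thesis using he_inj assms kk by metis
  next
    case False
    then have "he w' k = (fst (he w k), \<not> snd (he w k))" using assms kk by (simp add: prod_eq_iff)
    also have "\<dots> = he (flip w k) k" using he_other assms by blast
    finally show ?thesis using he_inj assms kk flip_lt by metis
  qed
qed

lemma half_at: "w < 8 \<Longrightarrow> half_edges_at Q3 w = {he w 0, he w 1, he w 2}"
proof (rule set_eqI)
  fix x assume w: "w < 8"
  show "x \<in> half_edges_at Q3 w \<longleftrightarrow> x \<in> {he w 0, he w 1, he w 2}"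
  proof
    assume "x \<in> half_edges_at Q3 w"
    then have x: "fst x < 12" "hend Q3 x = w" by (auto simp: half_edges_at_def Q3_simps)
    then have "x = he w (fst x div 4)" using he_surj by metis
    moreover have "fst x div 4 < 3" using x by auto
    ultimately show "x \<in> {he w 0, he w 1, he w 2}" using less3 by force
  next
    assume "x \<in> {he w 0, he w 1, he w 2}"
    then show "x \<in> half_edges_at Q3 w" using w he_edge he_hend
      by (auto simp: half_edges_at_def Q3_simps)
  qed
qed

lemma tile_Q: "w < 8 \<Longrightarrow> tile_at Q3 lam w = {#lam (he w 0), lam (he w 1), lam (he w 2)#}"
proof -
  assume w: "w < 8"
  have d: "he w 0 \<noteq> he w 1" "he w 0 \<noteq> he w 2" "he w 1 \<noteq> he w 2"
    using he_inj[OF w _ w, of 0 1] he_inj[OF w _ w, of 0 2] he_inj[OF w _ w, of 1 2] by auto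
  show ?thesis unfolding tile_at_def half_at[OF w] using d by simp
qed

lemma compl_compl[simp]: "compl (compl x) = x" by (simp add: compl_def)
lemma compl_ne: "compl x \<noteq> x" by (cases x) (simp add: compl_def)

lemma lam_other:
  assumes "assembly_design Q3 lam" "w < 8" "k < 3"
  shows "lam (he (flip w k) k) = compl (lam (he w k))"
proof -
  have e: "fst (he w k) \<in> edges Q3" using he_edge assms by (simp add: Q3_simps)
  have ad: "lam (fst (he w k), True) = compl (lam (fst (he w k), False))"
    using assms(1) e unfolding assembly_design_def by blast
  have o: "he (flip w k) k = (fst (he w k), \<not> snd (he w k))" using he_other assms by metis
  show ?thesis
  proof (cases "snd (he w k)")
    case True
    then have "he w k = (fst (he w k), True)" by (simp add: prod_eq_iff)
    then show ?thesis using o True ad by (metis compl_compl)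
  next
    case False
    then have "he w k = (fst (he w k), False)" by (simp add: prod_eq_iff)
    then show ?thesis using o False ad by metis
  qed
qed

definition pq :: "nat \<Rightarrow> bool" where "pq w \<longleftrightarrow> w \<in> {1,2,4,7}"

lemma adj_pq: "adjH Q3 a b \<Longrightarrow> pq a \<noteq> pq b"
proof -
  assume "adjH Q3 a b"
  then obtain e where e: "e < 12" "ends Q3 e = (a,b) \<or> ends Q3 e = (b,a)"
    unfolding adjH_def by (auto simp: Q3_simps)
  then have "Q3_edge_list ! e = (a,b) \<or> Q3_edge_list ! e = (b,a)" by (simp add: Q3_def)
  then show ?thesis using less12[OF e(1)] by (auto simp: Q3_edge_list_def pq_def)
qed

lemma notbad_Q3: "\<not> bad Q3"
proof -
  have l: "fst (ends Q3 e) \<noteq> snd (ends Q3 e)" if "e < 12" for e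
    using less12[OF that] by (auto simp: Q3_def Q3_edge_list_def)
  have p: "ends Q3 e \<noteq> ends Q3 e' \<and> ends Q3 e \<noteq> prod.swap (ends Q3 e')" if "e < 12" "e' < 12" "e \<noteq> e'" for e e'
    using less12[OF that(1)] less12[OF that(2)] that(3) by (auto simp: Q3_def Q3_edge_list_def)
  have t: "\<not> (adjH Q3 a b \<and> adjH Q3 b c \<and> adjH Q3 a c)" for a b c
    using adj_pq by blast
  show ?thesis unfolding bad_def using l p t by (auto simp: Q3_simps)
qed



lemma wf_Q3: "wf_graph Q3"
proof -
  have "fst (ends Q3 e) < 8 \<and> snd (ends Q3 e) < 8" if "e < 12" for e
    using less12[OF that] by (auto simp: Q3_def Q3_edge_list_def)
  then show ?thesis unfolding wf_graph_def by (auto simp: Q3_simps)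
qed

lemma NB:
  assumes "scenario3 P Q3" "assembly_design Q3 lam" "pot_of Q3 lam \<subseteq> P"
    "fst h1 < 12" "fst h2 < 12" "lam h1 = lam h2"
  shows "\<not> bad (swapG Q3 h1 h2)"
proof
  assume b: "bad (swapG Q3 h1 h2)"
  have r: "realizes P (swapG Q3 h1 h2)"
    using realizes_swapG[OF wf_Q3, of h1 h2 lam P] assms by (simp add: Q3_simps)
  then have "graph_iso (swapG Q3 h1 h2) Q3" using assms(1) unfolding scenario3_def by simp
  moreover have "wf_graph (swapG Q3 h1 h2)" using r unfolding realizes_def by blast
  ultimately have "bad Q3" using bad_iso b by blast
  then show False using notbad_Q3 by blast
qed

lemma hsw:
  assumes "u < 8" "i < 3" "v < 8" "j < 3" "w < 8" "k < 3"
  shows "hend Q3 (sw (he u i) (he v j) (he w k)) = (if w = u \<and> k = i then v else if w = v \<and> k = j then u else w)"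
  using assms he_inj[of w k u i] he_inj[of w k v j] he_hend by (auto simp: sw_def)

lemma eset:
  assumes "w < 8" "k < 3"
  shows "{fst (ends (swapG Q3 h1 h2) (fst (he w k))), snd (ends (swapG Q3 h1 h2) (fst (he w k)))}
       = {hend Q3 (sw h1 h2 (he w k)), hend Q3 (sw h1 h2 (he (flip w k) k))}"
proof -
  have o: "he (flip w k) k = (fst (he w k), \<not> snd (he w k))" using he_other assms by metis
  show ?thesis
  proof (cases "snd (he w k)")
    case True
    then have "he w k = (fst (he w k), True)" by (simp add: prod_eq_iff)
    then show ?thesis using o True by (simp add: swapG_def)
  next
    case False
    then have "he w k = (fst (he w k), False)" by (simp add: prod_eq_iff)
    then show ?thesis using o False by (auto simp: swapG_def)
  qed
qed

lemma adj_of_eset: "e \<in> edges H \<Longrightarrow> {fst (ends H e), snd (ends H e)} = {a,b} \<Longrightarrow> adjH H a b"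
  unfolding adjH_def by (auto simp: doubleton_eq_iff prod_eq_iff)

lemma swapG_sym: "swapG G h1 h2 = swapG G h2 h1"
proof -
  have "sw h1 h2 = sw h2 h1" by (auto simp: sw_def fun_eq_iff)
  then show ?thesis by (simp add: swapG_def)
qed

lemma bad_loop:
  assumes "u < 8" "i < 3" "j < 3" "v = flip u i" "j \<noteq> i"
  shows "bad (swapG Q3 (he u i) (he v j))"
proof -
  have v: "v < 8" using assms flip_lt by blast
  have "{fst (ends (swapG Q3 (he u i) (he v j)) (fst (he u i))), snd (ends (swapG Q3 (he u i) (he v j)) (fst (he u i)))} = {v}"
    unfolding eset[OF assms(1,2)] using hsw[OF assms(1,2) v assms(3)] assms flip_lt flip_ne v
    by (auto simp: )
  moreover have "fst (he u i) \<in> edges (swapG Q3 (he u i) (he v j))" using he_edge assms by (simp add: Q3_simps)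
  ultimately show ?thesis unfolding bad_def by (metis insert_absorb2 doubleton_eq_iff)
qed



lemma bad_par:
  assumes "u < 8" "i < 3" "v < 8" "j < 3" "k < 3" "u \<noteq> v" "v \<noteq> flip u i" "k \<noteq> j" "flip v k = flip u i"
  shows "bad (swapG Q3 (he u i) (he v j))"
proof -
  let ?H = "swapG Q3 (he u i) (he v j)"
  have f1: "flip u i < 8" "flip u i \<noteq> u" using flip_lt flip_ne assms by auto
  have f2: "flip v k < 8" "flip v k \<noteq> v" using flip_lt flip_ne assms by auto
  have s1: "{fst (ends ?H (fst (he u i))), snd (ends ?H (fst (he u i)))} = {v, flip u i}"
    unfolding eset[OF assms(1,2)] using hsw[OF assms(1-4)] f1 assms by auto
  have s2: "{fst (ends ?H (fst (he v k))), snd (ends ?H (fst (he v k)))} = {v, flip u i}"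
    unfolding eset[OF assms(3,5)] using hsw[OF assms(1-4)] f1 f2 assms by auto
  have ne: "fst (he u i) \<noteq> fst (he v k)" using edge_eq[OF assms(1,2,3,5)] assms by auto
  have ed: "fst (he u i) \<in> edges ?H" "fst (he v k) \<in> edges ?H" using he_edge assms by (auto simp: Q3_simps)
  have "ends ?H (fst (he u i)) = ends ?H (fst (he v k)) \<or> ends ?H (fst (he u i)) = prod.swap (ends ?H (fst (he v k)))"
    using s1 s2 by (auto simp: doubleton_eq_iff prod_eq_iff)
  then show ?thesis unfolding bad_def using ne ed by blast
qed

lemma bad_par':
  assumes "u < 8" "i < 3" "v < 8" "j < 3" "k < 3" "u \<noteq> v" "u \<noteq> flip v j" "k \<noteq> i" "flip u k = flip v j"
  shows "bad (swapG Q3 (he u i) (he v j))"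
  using bad_par[of v j u i k] assms swapG_sym by metis

lemma bad_tri:
  assumes "u < 8" "i < 3" "v < 8" "j < 3" "k < 3" "m < 3" "u \<noteq> v" "v \<noteq> flip u i" "k \<noteq> j"
    "flip (flip u i) m = flip v k" "flip v k \<noteq> u"
  shows "bad (swapG Q3 (he u i) (he v j))"
proof -
  let ?H = "swapG Q3 (he u i) (he v j)"
  let ?w = "flip u i" and ?c = "flip v k"
  have f1: "?w < 8" "?w \<noteq> u" using flip_lt flip_ne assms by auto
  have f2: "?c < 8" "?c \<noteq> v" using flip_lt flip_ne assms by auto
  have f3: "?c \<noteq> ?w" using flip_ne[of ?w m] f1 assms by auto
  have s1: "{fst (ends ?H (fst (he u i))), snd (ends ?H (fst (he u i)))} = {v, ?w}"
    unfolding eset[OF assms(1,2)] using hsw[OF assms(1-4)] f1 assms by auto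
  have s2: "{fst (ends ?H (fst (he v k))), snd (ends ?H (fst (he v k)))} = {v, ?c}"
    unfolding eset[OF assms(3,5)] using hsw[OF assms(1-4)] f1 f2 assms by auto
  have s3: "{fst (ends ?H (fst (he ?w m))), snd (ends ?H (fst (he ?w m)))} = {?w, ?c}"
    unfolding eset[OF f1(1) assms(6)] using hsw[OF assms(1-4)] f1 f2 f3 assms by auto
  have ed: "fst (he u i) \<in> edges ?H" "fst (he v k) \<in> edges ?H" "fst (he ?w m) \<in> edges ?H"
    using he_edge assms f1 by (auto simp: Q3_simps)
  have "adjH ?H v ?w" "adjH ?H ?w ?c" "adjH ?H v ?c"
    using adj_of_eset ed s1 s2 s3 by blast+
  moreover have "v \<noteq> ?w" "?w \<noteq> ?c" "v \<noteq> ?c" using assms f2 f3 by auto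
  ultimately show ?thesis unfolding bad_def by blast
qed



lemma flip_tab[simp]:
  "flip 0 0 = (Suc 0)"
  "flip 0 (Suc 0) = 2"
  "flip 0 2 = 4"
  "flip (Suc 0) 0 = 0"
  "flip (Suc 0) (Suc 0) = 3"
  "flip (Suc 0) 2 = 5"
  "flip 2 0 = 3"
  "flip 2 (Suc 0) = 0"
  "flip 2 2 = 6"
  "flip 3 0 = 2"
  "flip 3 (Suc 0) = (Suc 0)"
  "flip 3 2 = 7"
  "flip 4 0 = 5"
  "flip 4 (Suc 0) = 6"
  "flip 4 2 = 0"
  "flip 5 0 = 4"
  "flip 5 (Suc 0) = 7"
  "flip 5 2 = (Suc 0)"
  "flip 6 0 = 7"
  "flip 6 (Suc 0) = 4"
  "flip 6 2 = 2"
  "flip 7 0 = 6"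
  "flip 7 (Suc 0) = 5"
  "flip 7 2 = 3"
  by (simp_all add: flip_def)

lemma cls:
  assumes "u < 8" "v < 8" "u \<noteq> v"
  shows "(v = flip u 0 \<or> v = flip u 1 \<or> v = flip u 2) \<or> v = 7 - u \<or>
    (v = flip (flip u 0) 1 \<or> v = flip (flip u 0) 2 \<or> v = flip (flip u 1) 2)"
  using less8[OF assms(1)] less8[OF assms(2)] assms(3) by (elim disjE; simp)

lemma anti_wit:
  assumes "u < 8" "i < 3" "j < 3"
  shows "\<exists>k m. k < 3 \<and> m < 3 \<and> k \<noteq> j \<and> 7 - u \<noteq> flip u i \<and> flip (7 - u) k \<noteq> u \<and>
         flip (flip u i) m = flip (7 - u) k"
proof -
  have c00: "i = 0 \<Longrightarrow> j = 0 \<Longrightarrow> ?thesis"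
    apply (rule exI[of _ "Suc 0"], rule exI[of _ 2]) using less8[OF assms(1)] by (elim disjE; simp)
  have c01: "i = 0 \<Longrightarrow> j = 1 \<Longrightarrow> ?thesis"
    apply (rule exI[of _ 2], rule exI[of _ "Suc 0"]) using less8[OF assms(1)] by (elim disjE; simp)
  have c02: "i = 0 \<Longrightarrow> j = 2 \<Longrightarrow> ?thesis"
    apply (rule exI[of _ "Suc 0"], rule exI[of _ 2]) using less8[OF assms(1)] by (elim disjE; simp)
  have c10: "i = 1 \<Longrightarrow> j = 0 \<Longrightarrow> ?thesis"
    apply (rule exI[of _ 2], rule exI[of _ 0]) using less8[OF assms(1)] by (elim disjE; simp)
  have c11: "i = 1 \<Longrightarrow> j = 1 \<Longrightarrow> ?thesis"
    apply (rule exI[of _ 0], rule exI[of _ 2]) using less8[OF assms(1)] by (elim disjE; simp)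
  have c12: "i = 1 \<Longrightarrow> j = 2 \<Longrightarrow> ?thesis"
    apply (rule exI[of _ 0], rule exI[of _ 2]) using less8[OF assms(1)] by (elim disjE; simp)
  have c20: "i = 2 \<Longrightarrow> j = 0 \<Longrightarrow> ?thesis"
    apply (rule exI[of _ "Suc 0"], rule exI[of _ 0]) using less8[OF assms(1)] by (elim disjE; simp)
  have c21: "i = 2 \<Longrightarrow> j = 1 \<Longrightarrow> ?thesis"
    apply (rule exI[of _ 0], rule exI[of _ "Suc 0"]) using less8[OF assms(1)] by (elim disjE; simp)
  have c22: "i = 2 \<Longrightarrow> j = 2 \<Longrightarrow> ?thesis"
    apply (rule exI[of _ 0], rule exI[of _ "Suc 0"]) using less8[OF assms(1)] by (elim disjE; simp)
  show ?thesis using less3[OF assms(2)] less3[OF assms(3)]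
    using c00 c01 c02 c10 c11 c12 c20 c21 c22 by blast
qed

lemma pq_tab[simp]:
  "\<not> pq 0"
  "pq (Suc 0)"
  "pq 2"
  "\<not> pq 3"
  "pq 4"
  "\<not> pq 5"
  "\<not> pq 6"
  "pq 7"
  by (simp_all add: pq_def)

lemma flip_comm:
  assumes "u < 8" "a < 3" "b < 3"
  shows "flip (flip u a) b = flip (flip u b) a"
  using less8[OF assms(1)] less3[OF assms(2)] less3[OF assms(3)] by (elim disjE; simp)

lemma d2_far:
  assumes "u < 8" "k1 < 3" "k2 < 3" "k1 \<noteq> k2" "i < 3"
  shows "flip (flip u k1) k2 \<noteq> flip u i \<and> u \<noteq> flip (flip (flip u k1) k2) i \<and> flip (flip u k1) k2 \<noteq> u"
  using less8[OF assms(1)] less3[OF assms(2)] less3[OF assms(3)] less3[OF assms(5)] assms(4)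
  by (elim disjE; simp)

lemma P1:
  assumes "u < 8" "k1 < 3" "k2 < 3"
  shows "pq (flip (flip u k1) k2) = pq u"
  using less8[OF assms(1)] less3[OF assms(2)] less3[OF assms(3)]
  by (elim disjE; simp)

lemma P2:
  assumes "u < 8" "s < 8" "pq u \<noteq> pq s" "u \<noteq> 7 - s"
  shows "u = flip s 0 \<or> u = flip s 1 \<or> u = flip s 2"
  using less8[OF assms(1)] less8[OF assms(2)] assms(3,4)
  by (elim disjE; simp)

lemma P3:
  assumes "a1 < 8" "b1 < 8" "a2 < 8" "b2 < 8" "a3 < 8" "b3 < 8"
    "distinct [a1, b1, a2, b2, a3, b3]"
    "pq b1 = pq a1" "pq a2 = pq a1" "pq b2 = pq a1" "pq a3 = pq a1" "pq b3 = pq a1"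
  shows False
proof -
  let ?S = "{w. w < (8::nat) \<and> pq w = pq a1}"
  have "?S \<subseteq> (if pq a1 then {1,2,4,7} else {0,3,5,6})"
  proof
    fix w assume "w \<in> ?S"
    then have "w < 8" "pq w = pq a1" by auto
    then have "pq w = pq a1" "w = 0 \<or> w = 1 \<or> w = 2 \<or> w = 3 \<or> w = 4 \<or> w = 5 \<or> w = 6 \<or> w = 7"
      using less8[of w] by auto
    then show "w \<in> (if pq a1 then {1,2,4,7} else {0,3,5,6})"
      by (cases "pq a1"; elim disjE; simp)
  qed
  moreover have "card (if pq a1 then {1,2,4,7} else {0,3,5,6::nat}) = 4" by simp
  moreover have "finite (if pq a1 then {1,2,4,7} else {0,3,5,6::nat})" by simp
  ultimately have c: "card ?S \<le> 4"
    using card_mono[of "if pq a1 then {1,2,4,7} else {0,3,5,6::nat}" ?S] by linarith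
  have sub: "{a1, b1, a2, b2, a3, b3} \<subseteq> ?S" using assms(1-6,8-12) by auto
  have finS: "finite ?S" by auto
  have "card {a1, b1, a2, b2, a3, b3} \<le> card ?S" by (rule card_mono[OF finS sub])
  then have "card {a1, b1, a2, b2, a3, b3} \<le> 4" using c by linarith
  moreover have "card {a1, b1, a2, b2, a3, b3} = 6" using assms(7) by (simp add: card_insert_if)
  ultimately show False by simp
qed



context
  fixes P :: "'a tile set" and lam :: "nat \<times> bool \<Rightarrow> 'a cend"
  assumes sc: "scenario3 P Q3" and ad: "assembly_design Q3 lam" and po: "pot_of Q3 lam \<subseteq> P"
begin

definition gp :: "nat \<Rightarrow> nat \<Rightarrow> bool" where
  "gp u v \<longleftrightarrow> u < 8 \<and> v < 8 \<and> u \<noteq> v \<and> tile_at Q3 lam u = tile_at Q3 lam v"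

lemma gp_intro: "u < 8 \<Longrightarrow> v < 8 \<Longrightarrow> u \<noteq> v \<Longrightarrow> tile_at Q3 lam u = tile_at Q3 lam v \<Longrightarrow> gp u v"
  unfolding gp_def by auto

lemma gp_sym: "gp u v \<Longrightarrow> gp v u" unfolding gp_def by auto

lemma nb: "u < 8 \<Longrightarrow> i < 3 \<Longrightarrow> v < 8 \<Longrightarrow> j < 3 \<Longrightarrow> lam (he u i) = lam (he v j) \<Longrightarrow>
    \<not> bad (swapG Q3 (he u i) (he v j))"
  using NB[OF sc ad po] he_edge by blast

lemma tile_mem:
  assumes "gp u v" "i < 3"
  shows "\<exists>j<3. lam (he u i) = lam (he v j)"
proof -
  have u: "u < 8" and v: "v < 8" and t: "tile_at Q3 lam u = tile_at Q3 lam v" using assms(1) unfolding gp_def by auto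
  have "lam (he u i) \<in># tile_at Q3 lam u" unfolding tile_Q[OF u, of lam] using less3[OF assms(2)] by auto
  then have "lam (he u i) \<in># {#lam (he v 0), lam (he v 1), lam (he v 2)#}" using t tile_Q[OF v, of lam] by simp
  then have "lam (he u i) = lam (he v 0) \<or> lam (he u i) = lam (he v 1) \<or> lam (he u i) = lam (he v 2)" by auto
  moreover have "(0::nat) < 3" "(1::nat) < 3" "(2::nat) < 3" by simp_all
  ultimately show ?thesis by blast
qed

lemma not_adj:
  assumes "gp u v" "i < 3" "v = flip u i"
  shows False
proof -
  have u: "u < 8" and v: "v < 8" and uv: "u \<noteq> v" using assms(1) unfolding gp_def by auto
  obtain j where j: "j < 3" "lam (he u i) = lam (he v j)" using tile_mem assms by blast
  show False
  proof (cases "j = i")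
    case True
    then have "lam (he v j) = compl (lam (he u i))" using lam_other[OF ad u assms(2)] assms(3) by simp
    then show False using j(2) compl_ne[of "lam (he u i)"] by simp
  next
    case False
    then show False using bad_loop[OF u assms(2) j(1) assms(3)] nb[OF u assms(2) v j(1) j(2)] by blast
  qed
qed

lemma not_anti:
  assumes "gp u v" "v = 7 - u"
  shows False
proof -
  have u: "u < 8" and v: "v < 8" and uv: "u \<noteq> v" using assms(1) unfolding gp_def by auto
  obtain j where j: "j < 3" "lam (he u 0) = lam (he v j)" using tile_mem[OF assms(1), of 0] by auto
  obtain k m where km: "k < 3" "m < 3" "k \<noteq> j" "7 - u \<noteq> flip u 0" "flip (7 - u) k \<noteq> u"
         "flip (flip u 0) m = flip (7 - u) k" using anti_wit[OF u _ j(1), of 0] by auto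
  have "bad (swapG Q3 (he u 0) (he v j))"
    using bad_tri[OF u _ v j(1) km(1,2) uv] km assms(2) by auto
  then show False using nb[OF u _ v j(1) j(2)] by simp
qed

lemma dist2:
  assumes "gp u v"
  shows "\<exists>k1<3. \<exists>k2<3. k1 \<noteq> k2 \<and> v = flip (flip u k1) k2"
proof -
  have u: "u < 8" and v: "v < 8" and uv: "u \<noteq> v" using assms(1) unfolding gp_def by auto
  have "\<not> (v = flip u 0 \<or> v = flip u 1 \<or> v = flip u 2)"
    using not_adj[OF assms, of 0] not_adj[OF assms, of 1] not_adj[OF assms, of 2] by auto
  moreover have "v \<noteq> 7 - u" using not_anti[OF assms] by auto
  ultimately have "v = flip (flip u 0) 1 \<or> v = flip (flip u 0) 2 \<or> v = flip (flip u 1) 2"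
    using cls[OF u v uv] by blast
  moreover have "(0::nat) < 3" "(1::nat) < 3" "(2::nat) < 3" "(0::nat) \<noteq> 1" "(0::nat) \<noteq> 2" "(1::nat) \<noteq> 2"
    by simp_all
  ultimately show ?thesis by blast
qed

lemma compat:
  assumes "gp u v" "k1 < 3" "k2 < 3" "k1 \<noteq> k2" "v = flip (flip u k1) k2" "i < 3" "j < 3"
    "lam (he u i) = lam (he v j)"
  shows "(\<forall>k<3. k \<noteq> j \<longrightarrow> flip v k \<noteq> flip u i) \<and> (\<forall>k<3. k \<noteq> i \<longrightarrow> flip u k \<noteq> flip v j)"
proof -
  have u: "u < 8" and v: "v < 8" and uv: "u \<noteq> v" using assms(1) unfolding gp_def by auto
  have far: "v \<noteq> flip u i" "u \<noteq> flip v j" using d2_far[OF u assms(2-4)] assms(5-7) by auto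
  have nbad: "\<not> bad (swapG Q3 (he u i) (he v j))" using nb[OF u assms(6) v assms(7,8)] .
  show ?thesis
    using bad_par[OF u assms(6) v assms(7) _ uv far(1)] bad_par'[OF u assms(6) v assms(7) _ uv far(2)] nbad
    by blast
qed

lemma Rel:
  assumes "gp u v" "k1 < 3" "k2 < 3" "k1 \<noteq> k2" "v = flip (flip u k1) k2" "i < 3" "j < 3"
    "lam (he u i) = lam (he v j)"
  shows "(i = k1 \<longrightarrow> j = k2) \<and> (i = k2 \<longrightarrow> j = k1) \<and> (i \<noteq> k1 \<and> i \<noteq> k2 \<longrightarrow> j \<noteq> k1 \<and> j \<noteq> k2)"
proof -
  have u: "u < 8" using assms(1) unfolding gp_def by auto
  have c: "(\<forall>k<3. k \<noteq> j \<longrightarrow> flip v k \<noteq> flip u i) \<and> (\<forall>k<3. k \<noteq> i \<longrightarrow> flip u k \<noteq> flip v j)"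
    using compat[OF assms] .
  have f1: "flip v k2 = flip u k1" using assms(5) flip_flip[OF flip_lt[OF u assms(2)] assms(3)] by simp
  have f2: "flip v k1 = flip u k2"
  proof -
    have "flip v k1 = flip (flip (flip u k2) k1) k1" using assms(5) flip_comm[OF u assms(2,3)] by simp
    also have "\<dots> = flip u k2" using flip_flip[OF flip_lt[OF u assms(3)] assms(2)] by simp
    finally show ?thesis .
  qed
  have c1: "\<And>k. k < 3 \<Longrightarrow> k \<noteq> j \<Longrightarrow> flip v k \<noteq> flip u i" using c by blast
  have c2: "\<And>k. k < 3 \<Longrightarrow> k \<noteq> i \<Longrightarrow> flip u k \<noteq> flip v j" using c by blast
  have a1: "j = k2" if "i = k1"
  proof (rule ccontr)
    assume "j \<noteq> k2" then have "k2 \<noteq> j" by simp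
    from c1[OF assms(3) this] f1 that show False by simp
  qed
  have a2: "j = k1" if "i = k2"
  proof (rule ccontr)
    assume "j \<noteq> k1" then have "k1 \<noteq> j" by simp
    from c1[OF assms(2) this] f2 that show False by simp
  qed
  have a3: "j \<noteq> k1" if "i \<noteq> k2"
  proof
    assume "j = k1"
    from c2[OF assms(3)] that have "flip u k2 \<noteq> flip v j" by auto
    with f2 \<open>j = k1\<close> show False by simp
  qed
  have a4: "j \<noteq> k2" if "i \<noteq> k1"
  proof
    assume "j = k2"
    from c2[OF assms(2)] that have "flip u k1 \<noteq> flip v j" by auto
    with f1 \<open>j = k2\<close> show False by simp
  qed
  show ?thesis using a1 a2 a3 a4 by blast
qed

lemma distinct_at:
  assumes "gp u v" "i < 3" "i' < 3" "i \<noteq> i'"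
  shows "lam (he u i) \<noteq> lam (he u i')"
proof
  assume eq: "lam (he u i) = lam (he u i')"
  obtain k1 k2 where k: "k1 < 3" "k2 < 3" "k1 \<noteq> k2" "v = flip (flip u k1) k2" using dist2[OF assms(1)] by blast
  obtain j where j: "j < 3" "lam (he u i) = lam (he v j)" using tile_mem[OF assms(1,2)] by blast
  have r1: "(i = k1 \<longrightarrow> j = k2) \<and> (i = k2 \<longrightarrow> j = k1) \<and> (i \<noteq> k1 \<and> i \<noteq> k2 \<longrightarrow> j \<noteq> k1 \<and> j \<noteq> k2)"
    using Rel[OF assms(1) k assms(2) j] .
  have r2: "(i' = k1 \<longrightarrow> j = k2) \<and> (i' = k2 \<longrightarrow> j = k1) \<and> (i' \<noteq> k1 \<and> i' \<noteq> k2 \<longrightarrow> j \<noteq> k1 \<and> j \<noteq> k2)"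
  proof -
    have "lam (he u i') = lam (he v j)" using eq j(2) by simp
    then show ?thesis using Rel[OF assms(1) k assms(3) j(1)] by blast
  qed
  have t: "i = i'" if "i \<noteq> k1" "i \<noteq> k2" "i' \<noteq> k1" "i' \<noteq> k2"
    using less3[OF assms(2)] less3[OF assms(3)] less3[OF k(1)] less3[OF k(2)] that k(3) by (elim disjE; simp)
  show False
  proof (cases "j = k2")
    case True
    then have "i = k1" "i' = k1" using r1 r2 k(3) by auto
    then show False using assms(4) by simp
  next
    case F1: False
    show False
    proof (cases "j = k1")
      case True
      then have "i = k2" "i' = k2" using r1 r2 k(3) by auto
      then show False using assms(4) by simp
    next
      case False
      then have "i \<noteq> k1" "i \<noteq> k2" "i' \<noteq> k1" "i' \<noteq> k2" using r1 r2 F1 by auto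
      then show False using t assms(4) by simp
    qed
  qed
qed

lemma common:
  assumes "gp u v" "k < 3" "k' < 3" "flip u k = flip v k'"
  shows "lam (he u k) = lam (he v k')"
proof -
  obtain k1 k2 where kk: "k1 < 3" "k2 < 3" "k1 \<noteq> k2" "v = flip (flip u k1) k2" using dist2[OF assms(1)] by blast
  obtain j where j: "j < 3" "lam (he u k) = lam (he v j)" using tile_mem[OF assms(1,2)] by blast
  have "\<forall>kk<3. kk \<noteq> j \<longrightarrow> flip v kk \<noteq> flip u k" using compat[OF assms(1) kk assms(2) j] by blast
  then have "k' = j"
  proof -
    assume h: "\<forall>kk<3. kk \<noteq> j \<longrightarrow> flip v kk \<noteq> flip u k"
    show "k' = j"
    proof (rule ccontr)
      assume "k' \<noteq> j"
      then have "flip v k' \<noteq> flip u k" using h assms(3) by blast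
      then show False using assms(4) by simp
    qed
  qed
  then show ?thesis using j by simp
qed

lemma CN:
  assumes "gp u v" "gp s t" "k < 3" "k' < 3" "s = flip u k" "s = flip v k'"
  shows False
proof -
  have u: "u < 8" and v: "v < 8" and uv: "u \<noteq> v" using assms(1) unfolding gp_def by auto
  have "flip u k = flip v k'" using assms(5,6) by simp
  then have e: "lam (he u k) = lam (he v k')" using common[OF assms(1,3,4)] by blast
  have "lam (he s k) = compl (lam (he u k))" using lam_other[OF ad u assms(3)] assms(5) by simp
  moreover have "lam (he s k') = compl (lam (he v k'))" using lam_other[OF ad v assms(4)] assms(6) by simp
  ultimately have eq: "lam (he s k) = lam (he s k')" using e by simp
  have "k \<noteq> k'"
  proof
    assume "k = k'"
    then have "flip s k = u" "flip s k = v" using assms(5,6) flip_flip[OF u assms(3)] flip_flip[OF v assms(4)] by simp_all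
    then show False using uv by simp
  qed
  then show False using distinct_at[OF assms(2,3,4)] eq by blast
qed

lemma nbr:
  assumes "u < 8" "s < 8" "pq u \<noteq> pq s" "u \<noteq> 7 - s"
  shows "\<exists>a<3. s = flip u a"
proof -
  have "u = flip s 0 \<or> u = flip s 1 \<or> u = flip s 2" using P2[OF assms] .
  then show ?thesis
  proof (elim disjE)
    assume "u = flip s 0" then have "s = flip u 0" using flip_flip[OF assms(2), of 0] by simp
    then show ?thesis by (intro exI[of _ 0]) simp
  next
    assume "u = flip s 1" then have "s = flip u 1" using flip_flip[OF assms(2), of 1] by simp
    then show ?thesis by (intro exI[of _ 1]) simp
  next
    assume "u = flip s 2" then have "s = flip u 2" using flip_flip[OF assms(2), of 2] by simp
    then show ?thesis by (intro exI[of _ 2]) simp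
  qed
qed

lemma Fin:
  assumes "gp u v" "gp u' v'" "gp s t" "distinct [u, v, u', v', s]"
    "pq v = pq u" "pq v' = pq u'" "pq u' = pq u" "pq s \<noteq> pq u"
  shows False
proof -
  have r: "u < 8" "v < 8" "u' < 8" "v' < 8" "s < 8" using assms(1-3) unfolding gp_def by auto
  show False
  proof (cases "7 - s = u \<or> 7 - s = v")
    case False
    have p: "pq u \<noteq> pq s" "pq v \<noteq> pq s" using assms(5,8) by auto
    have q: "u \<noteq> 7 - s" "v \<noteq> 7 - s" using False by auto
    obtain a where "a < 3" "s = flip u a" using nbr[OF r(1) r(5) p(1) q(1)] by blast
    moreover obtain b where "b < 3" "s = flip v b" using nbr[OF r(2) r(5) p(2) q(2)] by blast
    ultimately show False using CN[OF assms(1,3)] by blast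
  next
    case True
    then have "7 - s \<noteq> u'" "7 - s \<noteq> v'" using assms(4) by auto
    have p: "pq u' \<noteq> pq s" "pq v' \<noteq> pq s" using assms(5-8) by auto
    have q: "u' \<noteq> 7 - s" "v' \<noteq> 7 - s" using \<open>7 - s \<noteq> u'\<close> \<open>7 - s \<noteq> v'\<close> by auto
    obtain a where "a < 3" "s = flip u' a" using nbr[OF r(3) r(5) p(1) q(1)] by blast
    moreover obtain b where "b < 3" "s = flip v' b" using nbr[OF r(4) r(5) p(2) q(2)] by blast
    ultimately show False using CN[OF assms(2,3)] by blast
  qed
qed

lemma gp_pq: "gp u v \<Longrightarrow> pq v = pq u"
proof -
  assume g: "gp u v"
  then obtain k1 k2 where "k1 < 3" "k2 < 3" "v = flip (flip u k1) k2" using dist2 by blast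
  moreover have "u < 8" using g unfolding gp_def by auto
  ultimately show ?thesis using P1 by blast
qed

end




theorem lemma6:
  fixes P :: "'a tile set" and lam :: "nat \<times> bool \<Rightarrow> 'a cend"
  assumes "pot P"
    and "scenario3 P Q3"
    and "assembly_design Q3 lam"
    and "pot_of Q3 lam \<subseteq> P"
  shows "\<not> (\<exists>a1 b1 a2 b2 a3 b3.
            {a1, b1, a2, b2, a3, b3} \<subseteq> verts Q3 \<and>
            a1 \<noteq> b1 \<and> a2 \<noteq> b2 \<and> a3 \<noteq> b3 \<and>
            tile_at Q3 lam a1 = tile_at Q3 lam b1 \<and>
            tile_at Q3 lam a2 = tile_at Q3 lam b2 \<and>
            tile_at Q3 lam a3 = tile_at Q3 lam b3 \<and>
            {a1, b1} \<inter> {a2, b2} = {} \<and> {a1, b1} \<inter> {a3, b3} = {} \<and>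
            {a2, b2} \<inter> {a3, b3} = {})"
proof
  assume "\<exists>a1 b1 a2 b2 a3 b3.
            {a1, b1, a2, b2, a3, b3} \<subseteq> verts Q3 \<and>
            a1 \<noteq> b1 \<and> a2 \<noteq> b2 \<and> a3 \<noteq> b3 \<and>
            tile_at Q3 lam a1 = tile_at Q3 lam b1 \<and>
            tile_at Q3 lam a2 = tile_at Q3 lam b2 \<and>
            tile_at Q3 lam a3 = tile_at Q3 lam b3 \<and>
            {a1, b1} \<inter> {a2, b2} = {} \<and> {a1, b1} \<inter> {a3, b3} = {} \<and>
            {a2, b2} \<inter> {a3, b3} = {}"
  then show False
  proof (elim exE conjE)
    fix a1 b1 a2 b2 a3 b3
    assume sub: "{a1, b1, a2, b2, a3, b3} \<subseteq> verts Q3" and ne: "a1 \<noteq> b1" "a2 \<noteq> b2" "a3 \<noteq> b3" and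
    t: "tile_at Q3 lam a1 = tile_at Q3 lam b1" "tile_at Q3 lam a2 = tile_at Q3 lam b2"
       "tile_at Q3 lam a3 = tile_at Q3 lam b3" and
    d: "{a1, b1} \<inter> {a2, b2} = {}" "{a1, b1} \<inter> {a3, b3} = {}" "{a2, b2} \<inter> {a3, b3} = {}"
  have r: "a1 < 8" "b1 < 8" "a2 < 8" "b2 < 8" "a3 < 8" "b3 < 8" using sub by (auto simp: Q3_simps)
  have g1: "gp lam a1 b1" using gp_intro[OF assms(2,3,4) r(1) r(2) ne(1) t(1)] .
  have g2: "gp lam a2 b2" using gp_intro[OF assms(2,3,4) r(3) r(4) ne(2) t(2)] .
  have g3: "gp lam a3 b3" using gp_intro[OF assms(2,3,4) r(5) r(6) ne(3) t(3)] .
  have x1: "a1 \<noteq> a2" "a1 \<noteq> b2" "b1 \<noteq> a2" "b1 \<noteq> b2" using d(1) by blast+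
  have x2: "a1 \<noteq> a3" "a1 \<noteq> b3" "b1 \<noteq> a3" "b1 \<noteq> b3" using d(2) by blast+
  have x3: "a2 \<noteq> a3" "a2 \<noteq> b3" "b2 \<noteq> a3" "b2 \<noteq> b3" using d(3) by blast+
  have dist: "distinct [a1, b1, a2, b2, a3, b3]" using ne x1 x2 x3 by simp
  note F = Fin[OF assms(2,3,4)]
  have p1: "pq b1 = pq a1" using gp_pq[OF assms(2,3,4) g1] .
  have p2: "pq b2 = pq a2" using gp_pq[OF assms(2,3,4) g2] .
  have p3: "pq b3 = pq a3" using gp_pq[OF assms(2,3,4) g3] .
  have "(pq a2 = pq a1 \<and> pq a3 = pq a1) \<or> (pq a1 = pq a2 \<and> pq a3 \<noteq> pq a1) \<or>
        (pq a1 = pq a3 \<and> pq a2 \<noteq> pq a1) \<or> (pq a2 = pq a3 \<and> pq a1 \<noteq> pq a2)" by auto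
  then show False
  proof (elim disjE conjE)
    assume e: "pq a2 = pq a1" "pq a3 = pq a1"
    have "pq b2 = pq a1" "pq b3 = pq a1" using e p2 p3 by simp_all
    then show False using P3[OF r dist p1 e(1)] e(2) by blast
  next
    assume e: "pq a1 = pq a2" "pq a3 \<noteq> pq a1"
    have "distinct [a1, b1, a2, b2, a3]" using dist by simp
    from F[OF g1 g2 g3 this p1 p2 e(1)[symmetric] e(2)] show False .
  next
    assume e: "pq a1 = pq a3" "pq a2 \<noteq> pq a1"
    have "distinct [a1, b1, a3, b3, a2]" using dist by auto
    from F[OF g1 g3 g2 this p1 p3 e(1)[symmetric] e(2)] show False .
  next
    assume e: "pq a2 = pq a3" "pq a1 \<noteq> pq a2"
    have "distinct [a2, b2, a3, b3, a1]" using dist by auto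
    from F[OF g2 g3 g1 this p2 p3 e(1)[symmetric] e(2)] show False .
  qed
  qed
qed

end
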